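(* Let $H$ be a Hilbert space and $T$ a densely defined closed operator on $H$ with closed range. Then $T$ is normal (i.e. $TT^{*}=T^{*}T$) if and only if $w(T)$ is normal.
   Context: For a densely defined closed operator $A$ with closed range, $C(A)=D(A)\cap N(A)^{\perp}$, and the Moore–Penrose inverse $A^{\dagger}$ is defined on $R(A)\oplus^{\perp}R(A)^{\perp}$ by $A^{\dagger}y=(A|_{C(A)})^{-1}y$ for $y\in R(A)$ and $A^{\dagger}y=0$ for $y\in R(A)^{\perp}$. The generalized Cauchy dual is $w(A)=A(A^{*}A)^{\dagger}$ (products on natural domains). *)

theory Defs
  imports "HOL-Analysis.Analysis"
begin

text \<open>A complex Hilbert space is modelled as a real Hilbert space
  (type class real_inner + complete_space; the real inner product is the real part
  of the complex one) together with a complex structure J (multiplication by i),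
  which is real-linear, squares to minus the identity and is isometric.\<close>

definition complex_structure :: "('a::real_inner \<Rightarrow> 'a) \<Rightarrow> bool" where
  "complex_structure J \<longleftrightarrow> linear J \<and> (\<forall>x. J (J x) = - x) \<and> (\<forall>x y. inner (J x) (J y) = inner x y)"

type_synonym 'a op = "'a set \<times> ('a \<Rightarrow> 'a)"

definition dom_op :: "'a op \<Rightarrow> 'a set" where "dom_op A = fst A"
definition app_op :: "'a op \<Rightarrow> 'a \<Rightarrow> 'a" where "app_op A = snd A"

definition clinear_op :: "('a::real_inner \<Rightarrow> 'a) \<Rightarrow> 'a op \<Rightarrow> bool" where
  "clinear_op J A \<longleftrightarrow> subspace (dom_op A) \<and> (\<forall>x\<in>dom_op A. J x \<in> dom_op A)
     \<and> (\<forall>x\<in>dom_op A. \<forall>y\<in>dom_op A. app_op A (x + y) = app_op A x + app_op A y)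
     \<and> (\<forall>c. \<forall>x\<in>dom_op A. app_op A (c *\<^sub>R x) = c *\<^sub>R app_op A x)
     \<and> (\<forall>x\<in>dom_op A. app_op A (J x) = J (app_op A x))"

definition densely_defined :: "'a::real_normed_vector op \<Rightarrow> bool" where
  "densely_defined A \<longleftrightarrow> closure (dom_op A) = UNIV"

definition graph_op :: "'a op \<Rightarrow> ('a \<times> 'a) set" where
  "graph_op A = {(x, app_op A x) | x. x \<in> dom_op A}"

definition closed_op :: "'a::real_normed_vector op \<Rightarrow> bool" where
  "closed_op A \<longleftrightarrow> closed (graph_op A)"

definition range_op :: "'a op \<Rightarrow> 'a set" where
  "range_op A = app_op A ` dom_op A"

definition ker_op :: "'a::zero op \<Rightarrow> 'a set" where
  "ker_op A = {x \<in> dom_op A. app_op A x = 0}"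

definition op_eq :: "'a op \<Rightarrow> 'a op \<Rightarrow> bool" where
  "op_eq A B \<longleftrightarrow> dom_op A = dom_op B \<and> (\<forall>x\<in>dom_op A. app_op A x = app_op B x)"

definition comp_op :: "'a op \<Rightarrow> 'a op \<Rightarrow> 'a op" where
  "comp_op A B = ({x \<in> dom_op B. app_op B x \<in> dom_op A}, \<lambda>x. app_op A (app_op B x))"

text \<open>Hilbert space adjoint (for a complex-linear operator the complex adjoint coincides
  with the adjoint w.r.t. the real part of the inner product).\<close>
definition adj_op :: "'a::real_inner op \<Rightarrow> 'a op" where
  "adj_op A = ({y. \<exists>z. \<forall>x\<in>dom_op A. inner (app_op A x) y = inner x z},
               \<lambda>y. THE z. \<forall>x\<in>dom_op A. inner (app_op A x) y = inner x z)"

definition normal_op :: "'a::real_inner op \<Rightarrow> bool" where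
  "normal_op A \<longleftrightarrow> op_eq (comp_op A (adj_op A)) (comp_op (adj_op A) A)"

definition coker_dom :: "'a::real_inner op \<Rightarrow> 'a set" where
  "coker_dom A = dom_op A \<inter> orthogonal_comp (ker_op A)"

definition mp_inv :: "'a::real_inner op \<Rightarrow> 'a op" where
  "mp_inv A = ({u + v | u v. u \<in> range_op A \<and> v \<in> orthogonal_comp (range_op A)},
               \<lambda>y. THE x. x \<in> coker_dom A \<and>
                   (\<exists>u v. y = u + v \<and> u \<in> range_op A \<and> v \<in> orthogonal_comp (range_op A)
                          \<and> app_op A x = u))"

definition cauchy_dual :: "'a::real_inner op \<Rightarrow> 'a op" where
  "cauchy_dual A = comp_op A (mp_inv (comp_op (adj_op A) A))"

end

theory Submission
  imports Defs
begin


lemma closed_orthogonal_comp: "closed (orthogonal_comp (W::'a::real_inner set))"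
proof -
  have "orthogonal_comp W = (\<Inter>y\<in>W. {x. inner y x = 0})"
    by (auto simp: orthogonal_comp_def orthogonal_def)
  moreover have "closed {x. inner y x = (0::real)}" for y :: 'a
    by (intro closed_Collect_eq continuous_intros)
  ultimately show ?thesis by auto
qed

lemma parallelogram_ineq:
  fixes p q :: "'a::real_inner"
  shows "(norm (p - q))\<^sup>2 = 2 * (norm p)\<^sup>2 + 2 * (norm q)\<^sup>2 - 4 * (norm ((1/2) *\<^sub>R (p + q)))\<^sup>2"
  by (simp add: power2_norm_eq_inner inner_diff_left inner_diff_right inner_add_left inner_add_right
      inner_commute algebra_simps)

lemma infdist_approx:
  assumes "A \<noteq> {}" "e > 0"
  shows "\<exists>a\<in>A. dist x a < infdist x A + e"
proof (rule ccontr)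
  assume "\<not> ?thesis"
  then have "\<forall>a\<in>A. infdist x A + e \<le> dist x a" by force
  then have "infdist x A + e \<le> infdist x A"
    unfolding infdist_notempty[OF assms(1)] by (intro cINF_greatest assms(1)) auto
  with assms show False by simp
qed

lemma proj_exists:
  fixes S :: "'a::{real_inner,complete_space} set"
  assumes sub: "subspace S" and cl: "closed S"
  shows "\<exists>s\<in>S. x - s \<in> orthogonal_comp S"
proof -
  define d where "d = infdist x S"
  have ne: "S \<noteq> {}" using sub subspace_0 by blast
  have "\<forall>n. \<exists>a\<in>S. dist x a < d + 1 / (real n + 1)"
    using infdist_approx[OF ne] unfolding d_def by simp
  then obtain s where sS: "\<And>n. s n \<in> S" and sd: "\<And>n. dist x (s n) < d + 1 / (real n + 1)"
    by metis
  have dle: "d \<le> norm (x - y)" if "y \<in> S" for y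
    using infdist_le[OF that, of x] by (simp add: d_def dist_norm)
  have d0: "d \<ge> 0" unfolding d_def by (rule infdist_nonneg)
  define a where "a n = norm (x - s n)" for n
  have a_lim: "a \<longlonglongrightarrow> d"
  proof (rule real_tendsto_sandwich[where f="\<lambda>n. d" and h="\<lambda>n. d + 1 / (real n + 1)"])
    show "\<forall>\<^sub>F n in sequentially. d \<le> a n" using dle sS by (auto simp: a_def)
    show "\<forall>\<^sub>F n in sequentially. a n \<le> d + 1 / (real n + 1)"
      using sd by (auto simp: a_def dist_norm less_imp_le)
    show "(\<lambda>n. d) \<longlonglongrightarrow> d" by simp
    have "(\<lambda>n. 1 / (real n + 1)) \<longlonglongrightarrow> 0" using LIMSEQ_inverse_real_of_nat by (simp add: inverse_eq_divide add.commute)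
    then show "(\<lambda>n. d + 1 / (real n + 1)) \<longlonglongrightarrow> d"
      using tendsto_add[of "\<lambda>n. d" d sequentially] by fastforce
  qed
  define b where "b n = (a n)\<^sup>2 - d\<^sup>2" for n
  have b_lim: "b \<longlonglongrightarrow> 0"
    unfolding b_def using tendsto_diff[OF tendsto_power[OF a_lim, of 2] tendsto_const[of "d\<^sup>2"]] by simp
  have key: "(norm (s m - s n))\<^sup>2 \<le> 2 * b m + 2 * b n" for m n
  proof -
    have mid: "(1/2) *\<^sub>R (s m + s n) \<in> S"
      using sS sub by (simp add: subspace_add subspace_scale)
    have "d \<le> norm (x - (1/2) *\<^sub>R (s m + s n))" using dle[OF mid] .
    then have "d\<^sup>2 \<le> (norm (x - (1/2) *\<^sub>R (s m + s n)))\<^sup>2" using d0 by (simp add: power_mono)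
    moreover have "x - (1/2) *\<^sub>R (s m + s n) = (1/2) *\<^sub>R ((x - s m) + (x - s n))"
      by (simp add: algebra_simps flip: scaleR_add_left)
    moreover have "s m - s n = (x - s n) - (x - s m)" by simp
    ultimately show ?thesis
      using parallelogram_ineq[of "x - s n" "x - s m"] unfolding b_def a_def
      by (simp add: add.commute)
  qed
  have "Cauchy s"
  proof (rule metric_CauchyI)
    fix e :: real assume e: "e > 0"
    then have "e\<^sup>2 / 4 > 0" by simp
    from order_tendstoD(2)[OF b_lim this] obtain N where N: "\<And>n. n \<ge> N \<Longrightarrow> b n < e\<^sup>2 / 4"
      by (auto simp: eventually_sequentially)
    show "\<exists>M. \<forall>m\<ge>M. \<forall>n\<ge>M. dist (s m) (s n) < e"
    proof (intro exI allI impI)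
      fix m n assume "m \<ge> N" "n \<ge> N"
      then have "(norm (s m - s n))\<^sup>2 < e\<^sup>2" using key[of m n] N[of m] N[of n] by linarith
      then show "dist (s m) (s n) < e" using e by (simp add: dist_norm power_less_imp_less_base)
    qed
  qed
  then obtain s0 where s0: "s \<longlonglongrightarrow> s0" using Cauchy_convergent_iff convergent_def by blast
  have s0S: "s0 \<in> S" using closed_sequentially[OF cl] sS s0 by blast
  have "(\<lambda>n. norm (x - s n)) \<longlonglongrightarrow> norm (x - s0)"
    by (intro tendsto_intros s0)
  then have nd: "norm (x - s0) = d" using a_lim LIMSEQ_unique unfolding a_def by blast
  have "x - s0 \<in> orthogonal_comp S"
    unfolding orthogonal_comp_def orthogonal_def
  proof (intro CollectI ballI)
    fix y assume yS: "y \<in> S"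
    define w where "w = x - s0"
    define c where "c = inner y w"
    define k where "k = inner y y"
    have k0: "k \<ge> 0" unfolding k_def by simp
    define t where "t = c / (k + 1)"
    have "s0 + t *\<^sub>R y \<in> S" using s0S yS sub by (simp add: subspace_add subspace_scale)
    then have "norm w \<le> norm (w - t *\<^sub>R y)" using dle nd unfolding w_def by (simp add: algebra_simps)
    then have "(norm w)\<^sup>2 \<le> (norm (w - t *\<^sub>R y))\<^sup>2" by (simp add: power_mono)
    then have "inner w w \<le> inner w w - 2 * t * c + t * t * k"
      by (simp add: power2_norm_eq_inner inner_diff_left inner_diff_right c_def k_def inner_commute algebra_simps)
    then have "2 * t * c \<le> t * t * k" by simp
    then have "2 * t * c * ((k + 1) * (k + 1)) \<le> t * t * k * ((k + 1) * (k + 1))"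
      by (rule mult_right_mono) simp
    note ineq = this
    have tk: "t * (k + 1) = c" using k0 by (simp add: t_def)
    have E1: "2 * t * c * ((k + 1) * (k + 1)) = 2 * c * c * (k + 1)"
    proof -
      have "2 * t * c * ((k + 1) * (k + 1)) = 2 * c * (t * (k + 1)) * (k + 1)"
        by (simp only: mult_ac)
      also have "\<dots> = 2 * c * c * (k + 1)" by (simp only: tk)
      finally show ?thesis .
    qed
    have E2: "t * t * k * ((k + 1) * (k + 1)) = c * c * k"
    proof -
      have "t * t * k * ((k + 1) * (k + 1)) = (t * (k + 1)) * (t * (k + 1)) * k"
        by (simp only: mult_ac)
      also have "\<dots> = c * c * k" by (simp only: tk)
      finally show ?thesis .
    qed
    have "2 * c * c * (k + 1) \<le> c * c * k" using ineq unfolding E1 E2 .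
    then have "c * c * (k + 2) \<le> 0" by (simp add: algebra_simps)
    then have "c * c \<le> 0" using k0 by (simp add: mult_le_0_iff)
    then have "c = 0" by (auto simp add: mult_le_0_iff)
    then show "inner y (x - s0) = 0" by (simp add: c_def w_def)
  qed
  with s0S show ?thesis by blast
qed



definition proj :: "'a::real_inner set \<Rightarrow> 'a \<Rightarrow> 'a" where
  "proj S x = (SOME s. s \<in> S \<and> x - s \<in> orthogonal_comp S)"

lemma orth_self_zero: "v \<in> S \<Longrightarrow> v \<in> orthogonal_comp S \<Longrightarrow> v = 0"
  by (auto simp: orthogonal_comp_def orthogonal_def)

lemma orthD: "v \<in> orthogonal_comp S \<Longrightarrow> s \<in> S \<Longrightarrow> inner s v = 0"
  "v \<in> orthogonal_comp S \<Longrightarrow> s \<in> S \<Longrightarrow> inner v s = 0"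
  by (auto simp: orthogonal_comp_def orthogonal_def inner_commute)

lemma orthI: "(\<And>s. s \<in> S \<Longrightarrow> inner s v = 0) \<Longrightarrow> v \<in> orthogonal_comp S"
  by (auto simp: orthogonal_comp_def orthogonal_def)

context
  fixes S :: "'a::{real_inner,complete_space} set"
  assumes sub: "subspace S" and cl: "closed S"
begin

lemma proj: "proj S x \<in> S" "x - proj S x \<in> orthogonal_comp S"
proof -
  obtain s where "s \<in> S \<and> x - s \<in> orthogonal_comp S" using proj_exists[OF sub cl, of x] by blast
  then have "proj S x \<in> S \<and> x - proj S x \<in> orthogonal_comp S"
    unfolding proj_def by (rule someI)
  then show "proj S x \<in> S" "x - proj S x \<in> orthogonal_comp S" by auto
qed

lemma proj_unique: assumes "s \<in> S" "x - s \<in> orthogonal_comp S" shows "proj S x = s"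
proof -
  have "s - proj S x \<in> S" using assms proj sub by (simp add: subspace_diff)
  moreover have "s - proj S x = (x - proj S x) - (x - s)" by simp
  then have "s - proj S x \<in> orthogonal_comp S"
    using proj assms subspace_orthogonal_comp by (metis subspace_diff)
  ultimately show ?thesis using orth_self_zero by fastforce
qed

lemma proj_id: "x \<in> S \<Longrightarrow> proj S x = x"
  by (rule proj_unique) (auto simp: subspace_orthogonal_comp subspace_0)

lemma proj_orth: "x \<in> orthogonal_comp S \<Longrightarrow> proj S x = 0"
  by (rule proj_unique) (auto simp: sub subspace_0)

lemma proj_add: "proj S (x + y) = proj S x + proj S y"
proof (rule proj_unique)
  show "proj S x + proj S y \<in> S" using proj sub by (simp add: subspace_add)
  have "x + y - (proj S x + proj S y) = (x - proj S x) + (y - proj S y)" by simp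
  then show "x + y - (proj S x + proj S y) \<in> orthogonal_comp S"
    using proj subspace_orthogonal_comp by (metis subspace_add)
qed

lemma proj_scale: "proj S (c *\<^sub>R x) = c *\<^sub>R proj S x"
proof (rule proj_unique)
  show "c *\<^sub>R proj S x \<in> S" using proj sub by (simp add: subspace_scale)
  have "c *\<^sub>R x - c *\<^sub>R proj S x = c *\<^sub>R (x - proj S x)" by (simp add: algebra_simps)
  then show "c *\<^sub>R x - c *\<^sub>R proj S x \<in> orthogonal_comp S"
    using proj subspace_orthogonal_comp by (metis subspace_scale)
qed

lemma proj_diff: "proj S (x - y) = proj S x - proj S y"
  using proj_add[of "x - y" y] by simp

lemma norm_proj_le: "norm (proj S x) \<le> norm x"
proof -
  have "inner (proj S x) (x - proj S x) = 0" using proj orthD by blast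
  then have "(norm x)\<^sup>2 = (norm (proj S x))\<^sup>2 + (norm (x - proj S x))\<^sup>2"
    by (simp add: power2_norm_eq_inner inner_diff_left inner_diff_right inner_commute)
  then have "(norm (proj S x))\<^sup>2 \<le> (norm x)\<^sup>2" by simp
  then show ?thesis using power2_le_imp_le by fastforce
qed

lemma orth_orth: "orthogonal_comp (orthogonal_comp S) = S"
proof
  show "S \<subseteq> orthogonal_comp (orthogonal_comp S)" by (rule orthogonal_comp_subset)
  show "orthogonal_comp (orthogonal_comp S) \<subseteq> S"
  proof
    fix x assume x: "x \<in> orthogonal_comp (orthogonal_comp S)"
    have "proj S x \<in> orthogonal_comp (orthogonal_comp S)" using proj orthogonal_comp_subset by blast
    then have "x - proj S x \<in> orthogonal_comp (orthogonal_comp S)"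
      using x subspace_orthogonal_comp by (metis subspace_diff)
    then have "x - proj S x = 0" using proj orth_self_zero by blast
    then show "x \<in> S" using proj by (metis eq_iff_diff_eq_0)
  qed
qed

end

lemma dense_orth_zero:
  fixes D :: "'a::real_inner set"
  assumes "closure D = UNIV" "\<And>x. x \<in> D \<Longrightarrow> inner x z = 0"
  shows "z = 0"
proof -
  have "closed {x. inner x z = 0}" by (intro closed_Collect_eq continuous_intros)
  moreover have "D \<subseteq> {x. inner x z = 0}" using assms by auto
  ultimately have "closure D \<subseteq> {x. inner x z = 0}" by (rule closure_minimal[rotated])
  then have "z \<in> {x. inner x z = 0}" using assms(1) by blast
  then show ?thesis by simp
qed

lemma riesz:
  fixes f :: "'a::{real_inner,complete_space} \<Rightarrow> real"
  assumes bl: "bounded_linear f"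
  shows "\<exists>z. \<forall>x. f x = inner x z"
proof (cases "\<forall>x. f x = 0")
  case True then show ?thesis by (intro exI[of _ 0]) simp
next
  case False
  then obtain x0 where fx0: "f x0 \<noteq> 0" by blast
  define K where "K = {x. f x = 0}"
  have lin: "linear f" using bl bounded_linear.linear by blast
  have subK: "subspace K" unfolding K_def subspace_def
    using lin by (simp add: linear_add linear_scale linear_0)
  have clK: "closed K" unfolding K_def
    by (intro closed_Collect_eq bounded_linear.continuous_on[OF bl] continuous_on_id continuous_on_const)
  define w where "w = x0 - proj K x0"
  have wK: "w \<in> orthogonal_comp K" using proj[OF subK clK] unfolding w_def by blast
  have "f (proj K x0) = 0" using proj[OF subK clK] unfolding K_def by blast
  then have fw: "f w = f x0" unfolding w_def by (simp add: linear_diff[OF lin])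
  then have w0: "w \<noteq> 0" using fx0 linear_0[OF lin] by auto
  then have ww: "inner w w > 0" by simp
  define z where "z = (f w / inner w w) *\<^sub>R w"
  have "f x = inner x z" for x
  proof -
    have "x - (f x / f w) *\<^sub>R w \<in> K"
      unfolding K_def using fx0 fw by (simp add: linear_diff[OF lin] linear_scale[OF lin])
    then have "inner (x - (f x / f w) *\<^sub>R w) w = 0" using wK orthD by blast
    then have "inner x w = (f x / f w) * inner w w" by (simp add: inner_diff_left)
    then show ?thesis using ww fx0 fw unfolding z_def by (simp add: field_simps)
  qed
  then show ?thesis by blast
qed



lemma baire_step:
  fixes G :: "'a::{real_normed_vector,complete_space} \<Rightarrow> 'b::real_normed_vector"
  shows "\<exists>n y0 r. r > 0 \<and> ball y0 r \<subseteq> closure {y. norm (G y) \<le> real n}"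
proof (rule ccontr)
  assume H: "\<not> ?thesis"
  define A where "A n = closure {y. norm (G y) \<le> real n}" for n
  have "euclidean interior_of \<Union>(range A) = {}"
  proof (rule Baire_category_alt)
    show "completely_metrizable_space (euclidean :: 'a topology) \<or> locally_compact_space (euclidean :: 'a topology) \<and> regular_space (euclidean :: 'a topology)"
      using completely_metrizable_space_euclidean by blast
    show "countable (range A)" by simp
    fix T assume "T \<in> range A"
    then obtain n where T: "T = A n" by blast
    have "interior T = {}"
    proof (rule ccontr)
      assume "interior T \<noteq> {}"
      then obtain y0 where "y0 \<in> interior T" by blast
      then obtain r where "r > 0" "ball y0 r \<subseteq> T" using open_contains_ball interior_subset
        by (metis open_interior subset_trans)
      then show False using H T A_def by blast
    qed
    then show "closedin euclidean T \<and> euclidean interior_of T = {}"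
      by (simp add: T A_def)
  qed
  moreover have "\<Union>(range A) = UNIV"
  proof -
    have "y \<in> A (nat \<lceil>norm (G y)\<rceil>)" for y
      unfolding A_def
      by (rule closure_subset[THEN subsetD]) (simp add: of_nat_nat real_nat_ceiling_ge)
    then show ?thesis by blast
  qed
  ultimately show False by simp
qed

lemma geo_tail: "(\<Sum>k\<in>{a<..a+d}. (1/2::real) ^ k) = (1/2) ^ a - (1/2) ^ (a + d)"
proof (induction d)
  case 0 then show ?case by simp
next
  case (Suc d)
  have "{a<..a + Suc d} = insert (a + Suc d) {a<..a+d}" by auto
  then have "(\<Sum>k\<in>{a<..a+Suc d}. (1/2::real) ^ k) = (1/2) ^ (a + Suc d) + (\<Sum>k\<in>{a<..a+d}. (1/2::real) ^ k)"
    by simp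
  also have "\<dots> = (1/2) ^ a - (1/2) ^ (a + Suc d)" using Suc by simp
  finally show ?case .
qed

lemma closed_graph_bounded:
  fixes G :: "'a::{real_normed_vector,complete_space} \<Rightarrow> 'b::{real_normed_vector,complete_space}"
  assumes lin: "linear G"
    and cg: "\<And>y x ys. ys \<longlonglongrightarrow> y \<Longrightarrow> (\<lambda>k. G (ys k)) \<longlonglongrightarrow> x \<Longrightarrow> G y = x"
  shows "\<exists>K. \<forall>y. norm (G y) \<le> K * norm y"
proof -
  obtain n y0 r where r: "r > 0" and ball: "ball y0 r \<subseteq> closure {y. norm (G y) \<le> real n}"
    using baire_step[of G] by blast
  define S2 where "S2 = {y. norm (G y) \<le> 2 * real n}"
  have b0: "y \<in> closure S2" if "norm y < r" for y
    unfolding closure_approachable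
  proof (intro allI impI)
    fix e :: real assume e: "e > 0"
    have "y0 + y \<in> closure {y. norm (G y) \<le> real n}" using ball that by (auto simp: dist_norm)
    then obtain a where a: "norm (G a) \<le> real n" "dist a (y0 + y) < e / 2"
      unfolding closure_approachable using e by (meson half_gt_zero mem_Collect_eq)
    have "y0 \<in> closure {y. norm (G y) \<le> real n}" using ball r by auto
    then obtain b where b: "norm (G b) \<le> real n" "dist b y0 < e / 2"
      unfolding closure_approachable using e by (meson half_gt_zero mem_Collect_eq)
    have "norm (G (a - b)) \<le> 2 * real n"
      using a b norm_triangle_ineq4[of "G a" "G b"] by (simp add: linear_diff[OF lin])
    moreover have "dist (a - b) y < e"
    proof -
      have "a - b - y = (a - (y0 + y)) - (b - y0)" by (simp add: algebra_simps)
      then have "norm (a - b - y) \<le> norm (a - (y0 + y)) + norm (b - y0)"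
        by (metis norm_triangle_ineq4)
      then show ?thesis using a b by (simp add: dist_norm)
    qed
    ultimately show "\<exists>z\<in>S2. dist z y < e" unfolding S2_def by blast
  qed
  define K0 where "K0 = 4 * real n / r"
  have K0: "K0 \<ge> 0" using r by (simp add: K0_def)
  have approx: "\<exists>z. norm (y - z) \<le> norm y / 2 \<and> norm (G z) \<le> K0 * norm y" for y
  proof (cases "y = 0")
    case True then show ?thesis by (intro exI[of _ 0]) (simp add: linear_0[OF lin])
  next
    case False
    then have ny: "norm y > 0" by simp
    define t where "t = r / (2 * norm y)"
    have t: "t > 0" using r ny by (simp add: t_def)
    have "norm (t *\<^sub>R y) < r" using r ny t by (simp add: t_def)
    then have "t *\<^sub>R y \<in> closure S2" by (rule b0)
    then obtain s where s: "s \<in> S2" "dist s (t *\<^sub>R y) < r / 4"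
      unfolding closure_approachable using r by (meson divide_pos_pos zero_less_numeral)
    define z where "z = (1 / t) *\<^sub>R s"
    have "y - z = (1 / t) *\<^sub>R (t *\<^sub>R y - s)" using t by (simp add: z_def algebra_simps)
    then have "norm (y - z) = norm (t *\<^sub>R y - s) / t" using t by simp
    also have "\<dots> \<le> (r / 4) / t"
    proof -
      have "norm (t *\<^sub>R y - s) \<le> r / 4" using s by (simp add: dist_norm norm_minus_commute)
      then show ?thesis using t by (rule divide_right_mono[OF _ less_imp_le])
    qed
    also have "\<dots> = norm y / 2" using r ny by (simp add: t_def field_simps)
    finally have 1: "norm (y - z) \<le> norm y / 2" .
    have "norm (G z) = norm (G s) / t" using t by (simp add: z_def linear_scale[OF lin])
    also have "\<dots> \<le> 2 * real n / t" using s t by (simp add: S2_def divide_right_mono)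
    also have "\<dots> = K0 * norm y" using r ny by (simp add: t_def K0_def field_simps)
    finally have 2: "norm (G z) \<le> K0 * norm y" .
    from 1 2 show ?thesis by blast
  qed
  define f where "f y = (SOME z. norm (y - z) \<le> norm y / 2 \<and> norm (G z) \<le> K0 * norm y)" for y
  have f: "norm (y - f y) \<le> norm y / 2" "norm (G (f y)) \<le> K0 * norm y" for y
    using someI_ex[OF approx[of y]] unfolding f_def by auto
  show ?thesis
  proof (intro exI allI)
    fix y
    define ys where "ys k = ((\<lambda>v. v - f v) ^^ k) y" for k
    define z where "z k = f (ys k)" for k
    have ys_suc: "ys (Suc k) = ys k - z k" for k by (simp add: ys_def z_def)
    have ys_le: "norm (ys k) \<le> norm y / 2 ^ k" for k
    proof (induction k)
      case 0 then show ?case by (simp add: ys_def)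
    next
      case (Suc k)
      have "norm (ys (Suc k)) \<le> norm (ys k) / 2" using f(1)[of "ys k"] by (simp add: ys_suc z_def)
      also have "\<dots> \<le> norm y / 2 ^ Suc k" using Suc by (simp add: divide_right_mono)
      finally show ?case .
    qed
    have sumz: "(\<Sum>k<m. z k) = y - ys m" for m
      by (induction m) (simp_all add: ys_def[of 0] ys_suc)
    have Gz: "norm (G (z k)) \<le> K0 * norm y * (1/2) ^ k" for k
    proof -
      have "norm (G (z k)) \<le> K0 * norm (ys k)" using f(2) by (simp add: z_def)
      also have "\<dots> \<le> K0 * (norm y / 2 ^ k)" using K0 ys_le[of k] by (rule mult_left_mono[rotated])
      also have "K0 * (norm y / 2 ^ k) = K0 * norm y * (1/2) ^ k"
        by (simp add: power_one_over)
      finally show ?thesis .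
    qed
    have tail: "norm (\<Sum>k\<in>{a<..b}. G (z k)) \<le> K0 * norm y * (1/2) ^ a" for a b
    proof (cases "a \<le> b")
      case True
      then obtain d where b: "b = a + d" using le_Suc_ex by blast
      have "norm (\<Sum>k\<in>{a<..b}. G (z k)) \<le> (\<Sum>k\<in>{a<..b}. K0 * norm y * (1/2) ^ k)"
        by (rule order_trans[OF norm_sum sum_mono]) (rule Gz)
      also have "\<dots> = K0 * norm y * (\<Sum>k\<in>{a<..b}. (1/2::real) ^ k)"
        by (simp add: sum_distrib_left)
      also have "(\<Sum>k\<in>{a<..b}. (1/2::real) ^ k) = (1/2) ^ a - (1/2) ^ b"
        unfolding b by (rule geo_tail)
      also have "K0 * norm y * ((1/2) ^ a - (1/2) ^ b) \<le> K0 * norm y * (1/2) ^ a"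
        using K0 by (simp add: mult_left_mono)
      finally show ?thesis .
    next
      case False
      then show ?thesis using K0 by simp
    qed
    have sG: "summable (\<lambda>k. G (z k))"
    proof (rule summable_bounded_partials[where g="\<lambda>a. K0 * norm y * (1/2) ^ a"])
      show "\<forall>\<^sub>F x0 in sequentially. \<forall>a\<ge>x0. \<forall>b>a. norm (\<Sum>k\<in>{a<..b}. G (z k)) \<le> K0 * norm y * (1/2) ^ a"
        using tail by simp
      show "(\<lambda>a. K0 * norm y * (1/2::real) ^ a) \<longlonglongrightarrow> 0"
        by (intro tendsto_mult_right_zero LIMSEQ_power_zero) simp
    qed
    have "(\<lambda>m. \<Sum>k<m. G (z k)) \<longlonglongrightarrow> (\<Sum>k. G (z k))"
      using sG summable_LIMSEQ by blast
    note partial = this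
    then have lim1: "(\<lambda>m. G (y - ys m)) \<longlonglongrightarrow> (\<Sum>k. G (z k))"
      by (simp add: sumz[symmetric] linear_sum[OF lin])
    have "(\<lambda>m. norm y / 2 ^ m) \<longlonglongrightarrow> 0"
      by (intro LIMSEQ_divide_realpow_zero) simp
    then have "ys \<longlonglongrightarrow> 0"
      by (rule Lim_transform_bound[rotated]) (use ys_le in auto)
    then have lim2: "(\<lambda>m. y - ys m) \<longlonglongrightarrow> y"
      using tendsto_diff[OF tendsto_const[of y]] by fastforce
    have eq: "G y = (\<Sum>k. G (z k))" by (rule cg[OF lim2 lim1])
    have pb: "norm (\<Sum>k<m. G (z k)) \<le> 2 * K0 * norm y" for m
    proof -
      have "norm (\<Sum>k<m. G (z k)) \<le> (\<Sum>k<m. K0 * norm y * (1/2) ^ k)"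
        by (rule order_trans[OF norm_sum sum_mono]) (rule Gz)
      also have "\<dots> = K0 * norm y * (\<Sum>k<m. (1/2::real) ^ k)"
        by (simp add: sum_distrib_left)
      also have "(\<Sum>k<m. (1/2::real) ^ k) = 2 - 2 * (1/2) ^ m"
        by (simp add: sum_gp_strict)
      also have "K0 * norm y * (2 - 2 * (1/2) ^ m) \<le> K0 * norm y * 2"
        using K0 by (simp add: mult_left_mono)
      finally show ?thesis by simp
    qed
    have "norm (\<Sum>k. G (z k)) \<le> 2 * K0 * norm y"
      by (rule LIMSEQ_le_const2[OF tendsto_norm[OF partial]]) (use pb in auto)
    then show "norm (G y) \<le> (2 * K0) * norm y" using eq by simp
  qed
qed



locale opT =
  fixes D :: "'a::{real_inner,complete_space} set" and Tf :: "'a \<Rightarrow> 'a"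
  assumes subD: "subspace D"
    and Tadd: "\<And>x y. x \<in> D \<Longrightarrow> y \<in> D \<Longrightarrow> Tf (x + y) = Tf x + Tf y"
    and Tscale: "\<And>c x. x \<in> D \<Longrightarrow> Tf (c *\<^sub>R x) = c *\<^sub>R Tf x"
    and dense: "closure D = UNIV"
    and Tclosed: "closed {(x, Tf x) | x. x \<in> D}"
    and Rclosed: "closed (Tf ` D)"
begin

definition "N = {x \<in> D. Tf x = 0}"
definition "R = Tf ` D"
definition "M = orthogonal_comp N"
definition "PN = proj N"
definition "PR = proj R"
definition "Gm y = (SOME x. x \<in> D \<and> x \<in> M \<and> Tf x = PR y)"
definition "DA = {y. \<exists>z. \<forall>x\<in>D. inner (Tf x) y = inner x z}"
definition "TA y = (THE z. \<forall>x\<in>D. inner (Tf x) y = inner x z)"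
definition "Bm v = (SOME z. \<forall>u. inner (Gm u) v = inner u z)"

lemma D0: "0 \<in> D" using subD subspace_0 by blast
lemma Ddiff: "x \<in> D \<Longrightarrow> y \<in> D \<Longrightarrow> x - y \<in> D" using subD subspace_diff by blast
lemma Dadd: "x \<in> D \<Longrightarrow> y \<in> D \<Longrightarrow> x + y \<in> D" using subD subspace_add by blast
lemma Dscale: "x \<in> D \<Longrightarrow> c *\<^sub>R x \<in> D" using subD subspace_scale by blast

lemma T0: "Tf 0 = 0" using Tscale[OF D0, of 0] by simp
lemma Tdiff: assumes "x \<in> D" "y \<in> D" shows "Tf (x - y) = Tf x - Tf y"
proof -
  have "Tf (x - y) + Tf y = Tf x" using Tadd[of "x - y" y] Ddiff assms by simp
  then show ?thesis by (simp add: eq_diff_eq)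
qed

lemma Tseq:
  assumes "\<And>k. xs k \<in> D" "xs \<longlonglongrightarrow> x" "(\<lambda>k. Tf (xs k)) \<longlonglongrightarrow> y"
  shows "x \<in> D \<and> Tf x = y"
proof -
  have lim: "(\<lambda>k. (xs k, Tf (xs k))) \<longlonglongrightarrow> (x, y)" using assms(2,3) by (rule tendsto_Pair)
  have mem: "\<And>k. (xs k, Tf (xs k)) \<in> {(x, Tf x) | x. x \<in> D}"
  proof -
    fix k show "(xs k, Tf (xs k)) \<in> {(x, Tf x) | x. x \<in> D}" using assms(1)[of k] by blast
  qed
  have "(x, y) \<in> {(x, Tf x) | x. x \<in> D}"
    by (rule closed_sequentially[OF Tclosed mem lim])
  then show ?thesis by blast
qed

lemma subN: "subspace N"
  unfolding subspace_def N_def using D0 T0 Dadd Dscale Tadd Tscale by auto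
lemma ND: "N \<subseteq> D" by (auto simp: N_def)
lemma clN: "closed N"
proof (rule closed_sequential_limits[THEN iffD2], intro allI impI, elim conjE)
  fix xs x assume a: "\<forall>k. xs k \<in> N" "xs \<longlonglongrightarrow> x"
  then have "x \<in> D \<and> Tf x = 0" by (intro Tseq) (auto simp: N_def)
  then show "x \<in> N" by (simp add: N_def)
qed
lemma subR: "subspace R"
  unfolding subspace_def R_def
proof (intro conjI ballI allI)
  show "0 \<in> Tf ` D" using D0 T0 by force
  fix x y assume "x \<in> Tf ` D" "y \<in> Tf ` D"
  then obtain a b where ab: "a \<in> D" "b \<in> D" "x = Tf a" "y = Tf b" by blast
  then have "x + y = Tf (a + b)" using Tadd by simp
  then show "x + y \<in> Tf ` D" using ab Dadd by blast
next
  fix c x assume "x \<in> Tf ` D"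
  then obtain a where a: "a \<in> D" "x = Tf a" by blast
  then have "c *\<^sub>R x = Tf (c *\<^sub>R a)" using Tscale by simp
  then show "c *\<^sub>R x \<in> Tf ` D" using a Dscale by blast
qed
lemma clR: "closed R" using Rclosed by (simp add: R_def)
lemma subM: "subspace M" by (simp add: M_def subspace_orthogonal_comp)
lemma clM: "closed M" by (simp add: M_def closed_orthogonal_comp)
lemma MN: "orthogonal_comp M = N" unfolding M_def by (rule orth_orth[OF subN clN])
lemma RR: "orthogonal_comp (orthogonal_comp R) = R" by (rule orth_orth[OF subR clR])

lemma PN: "PN x \<in> N" "x - PN x \<in> M"
  using proj[OF subN clN] by (auto simp: PN_def M_def)
lemma PR: "PR x \<in> R" "x - PR x \<in> orthogonal_comp R"
  using proj[OF subR clR] by (auto simp: PR_def)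
lemma PR_id: "x \<in> R \<Longrightarrow> PR x = x" unfolding PR_def by (rule proj_id[OF subR clR])
lemma PR_orth: "x \<in> orthogonal_comp R \<Longrightarrow> PR x = 0" unfolding PR_def by (rule proj_orth[OF subR clR])
lemma PN_id: "x \<in> N \<Longrightarrow> PN x = x" unfolding PN_def by (rule proj_id[OF subN clN])
lemma PN_M: "x \<in> M \<Longrightarrow> PN x = 0" unfolding PN_def M_def by (rule proj_orth[OF subN clN])
lemma PR_add: "PR (x + y) = PR x + PR y" unfolding PR_def by (rule proj_add[OF subR clR])
lemma PR_scale: "PR (c *\<^sub>R x) = c *\<^sub>R PR x" unfolding PR_def by (rule proj_scale[OF subR clR])
lemma PR_diff: "PR (x - y) = PR x - PR y" unfolding PR_def by (rule proj_diff[OF subR clR])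
lemma PR_norm: "norm (PR x) \<le> norm x" unfolding PR_def by (rule norm_proj_le[OF subR clR])

lemma NM_inner: "n \<in> N \<Longrightarrow> m \<in> M \<Longrightarrow> inner n m = 0" "n \<in> N \<Longrightarrow> m \<in> M \<Longrightarrow> inner m n = 0"
  unfolding M_def using orthD by blast+

lemma M_inter_N: "x \<in> M \<Longrightarrow> x \<in> N \<Longrightarrow> x = 0"
  unfolding M_def using orth_self_zero by blast

lemma R_inter: "x \<in> R \<Longrightarrow> x \<in> orthogonal_comp R \<Longrightarrow> x = 0"
  using orth_self_zero by blast

lemma inj_M: assumes "x \<in> D" "x \<in> M" "x' \<in> D" "x' \<in> M" "Tf x = Tf x'" shows "x = x'"
proof -
  have "x - x' \<in> N" using assms Ddiff Tdiff by (simp add: N_def)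
  moreover have "x - x' \<in> M" using assms subM subspace_diff by blast
  ultimately have "x - x' = 0" using M_inter_N by blast
  then show ?thesis by simp
qed

lemma decompD: assumes "x \<in> D" shows "x - PN x \<in> D" "Tf (x - PN x) = Tf x"
  using assms PN ND Ddiff Tdiff by (auto simp: N_def subset_iff)

lemma G_ex: "\<exists>x. x \<in> D \<and> x \<in> M \<and> Tf x = PR y"
proof -
  have "PR y \<in> Tf ` D" using PR(1) by (simp add: R_def)
  then obtain x1 where "x1 \<in> D" "Tf x1 = PR y" by (metis imageE)
  then show ?thesis using decompD PN by metis
qed

lemma G: "Gm y \<in> D" "Gm y \<in> M" "Tf (Gm y) = PR y"
  using someI_ex[OF G_ex[of y]] unfolding Gm_def by auto

lemma G_unique: "x \<in> D \<Longrightarrow> x \<in> M \<Longrightarrow> Tf x = PR y \<Longrightarrow> Gm y = x"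
  using inj_M G by metis

lemma G_add: "Gm (a + b) = Gm a + Gm b"
proof (rule G_unique)
  show "Gm a + Gm b \<in> D" using G Dadd by blast
  show "Gm a + Gm b \<in> M" using subspace_add[OF subM G(2) G(2)] .
  show "Tf (Gm a + Gm b) = PR (a + b)" using G Tadd PR_add by simp
qed
lemma G_scale: "Gm (c *\<^sub>R a) = c *\<^sub>R Gm a"
proof (rule G_unique)
  show "c *\<^sub>R Gm a \<in> D" using G Dscale by blast
  show "c *\<^sub>R Gm a \<in> M" using subspace_scale[OF subM G(2)] .
  show "Tf (c *\<^sub>R Gm a) = PR (c *\<^sub>R a)" using G Tscale PR_scale by simp
qed
lemma G_lin: "linear Gm"
  by (rule linearI) (simp_all add: G_add G_scale)
lemma G0: "Gm 0 = 0" using linear_0[OF G_lin] .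
lemma G_diff: "Gm (a - b) = Gm a - Gm b" using linear_diff[OF G_lin] .

lemma G_T: "x \<in> D \<Longrightarrow> Gm (Tf x) = x - PN x"
  by (rule G_unique) (use decompD PN PR_id in \<open>auto simp: R_def\<close>)

lemma G_Rperp: assumes "v \<in> orthogonal_comp R" shows "Gm v = 0"
proof (rule G_unique)
  show "0 \<in> D" by (rule D0)
  show "0 \<in> M" by (rule subspace_0[OF subM])
  show "Tf 0 = PR v" using T0 PR_orth[OF assms] by simp
qed

lemma G_PR: "Gm (PR y) = Gm y"
proof -
  have "Gm y = Gm (PR y + (y - PR y))" by simp
  also have "\<dots> = Gm (PR y) + Gm (y - PR y)" by (rule G_add)
  also have "\<dots> = Gm (PR y)" using G_Rperp[OF PR(2)] by simp
  finally show ?thesis by simp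
qed

lemma G_zero: assumes "Gm x = 0" shows "x \<in> orthogonal_comp R"
proof -
  have "PR x = 0" using G(3)[of x] T0 assms by simp
  then show ?thesis using PR(2)[of x] by simp
qed

lemma G_bounded: "bounded_linear Gm"
proof -
  have "\<exists>K. \<forall>y. norm (Gm y) \<le> K * norm y"
  proof (rule closed_graph_bounded[OF G_lin])
    fix y x ys assume ys: "ys \<longlonglongrightarrow> y" and Gys: "(\<lambda>k. Gm (ys k)) \<longlonglongrightarrow> x"
    have "(\<lambda>k. PR (ys k)) \<longlonglongrightarrow> PR y"
    proof -
      have "(\<lambda>k. ys k - y) \<longlonglongrightarrow> 0" using ys by (simp add: LIM_zero)
      then have "(\<lambda>k. PR (ys k - y)) \<longlonglongrightarrow> 0"
        by (rule Lim_transform_bound[rotated]) (use PR_norm in auto)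
      then show ?thesis by (simp add: PR_diff LIM_zero_iff)
    qed
    then have "(\<lambda>k. Tf (Gm (ys k))) \<longlonglongrightarrow> PR y" by (simp add: G)
    then have xD: "x \<in> D \<and> Tf x = PR y" by (rule Tseq[of "\<lambda>k. Gm (ys k)", OF G(1) Gys])
    have "x \<in> M" by (rule closed_sequentially[OF clM _ Gys]) (rule G(2))
    then show "Gm y = x" using G_unique xD by blast
  qed
  then obtain K where K: "\<And>y. norm (Gm y) \<le> K * norm y" by blast
  show ?thesis
    by (rule bounded_linear_intro[where K=K]) (simp_all add: G_add G_scale K mult.commute)
qed

lemma B_ex: "\<exists>z. \<forall>u. inner (Gm u) v = inner u z"
  by (rule riesz) (rule bounded_linear_compose[OF bounded_linear_inner_left G_bounded])

lemma B_adj: "inner (Gm u) v = inner u (Bm v)"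
  using someI_ex[OF B_ex[of v]] unfolding Bm_def by blast

lemma rep_unique: "(\<And>u. inner u z = inner u z') \<Longrightarrow> z = z'"
  by (metis inner_diff_right inner_eq_zero_iff right_minus_eq)

lemma B_add: "Bm (a + b) = Bm a + Bm b"
  by (rule rep_unique) (simp add: B_adj[symmetric] inner_add_right)
lemma B_scale: "Bm (c *\<^sub>R a) = c *\<^sub>R Bm a"
  by (rule rep_unique) (simp add: B_adj[symmetric])
lemma B_lin: "linear Bm" by (rule linearI) (simp_all add: B_add B_scale)
lemma B0: "Bm 0 = 0" using linear_0[OF B_lin] .
lemma B_diff: "Bm (a - b) = Bm a - Bm b" using linear_diff[OF B_lin] .

lemma B_N: "n \<in> N \<Longrightarrow> Bm n = 0"
  by (rule rep_unique) (simp add: B_adj[symmetric] NM_inner G)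

lemma B_PN: "Bm (x - PN x) = Bm x" using B_diff B_N PN by simp

lemma B_R: "Bm v \<in> R"
proof -
  have "Bm v \<in> orthogonal_comp (orthogonal_comp R)"
    by (rule orthI) (simp add: B_adj[symmetric] G_Rperp)
  then show ?thesis using RR by simp
qed

lemma adj_char: assumes "\<forall>x\<in>D. inner (Tf x) y = inner x z" shows "y \<in> DA" "TA y = z"
proof -
  show "y \<in> DA" using assms by (auto simp: DA_def)
  show "TA y = z" unfolding TA_def
  proof (rule the_equality)
    show "\<forall>x\<in>D. inner (Tf x) y = inner x z" by fact
    fix z' assume "\<forall>x\<in>D. inner (Tf x) y = inner x z'"
    then have "\<And>x. x \<in> D \<Longrightarrow> inner x (z' - z) = 0" using assms by (simp add: inner_diff_right)
    then have "z' - z = 0" by (rule dense_orth_zero[OF dense])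
    then show "z' = z" by simp
  qed
qed

lemma adj_prop: assumes "y \<in> DA" "x \<in> D" shows "inner (Tf x) y = inner x (TA y)"
proof -
  obtain z where z: "\<forall>x\<in>D. inner (Tf x) y = inner x z" using assms by (auto simp: DA_def)
  then show ?thesis using adj_char[OF z] assms by simp
qed

lemma key_adj: assumes v: "v \<in> orthogonal_comp R"
  shows "Bm u + v \<in> DA" "TA (Bm u + v) = u - PN u"
proof -
  have "\<forall>x\<in>D. inner (Tf x) (Bm u + v) = inner x (u - PN u)"
  proof
    fix x assume x: "x \<in> D"
    have "Tf x \<in> R" using x by (simp add: R_def)
    then have "inner (Tf x) v = 0" using v orthD by blast
    then have "inner (Tf x) (Bm u + v) = inner (Gm (Tf x)) u"
      by (simp add: inner_add_right B_adj inner_commute[of v])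
    also have "\<dots> = inner (x - PN x) u" using G_T x by simp
    also have "\<dots> = inner (x - PN x) (u - PN u)"
      using NM_inner PN by (simp add: inner_diff_right)
    also have "\<dots> = inner x (u - PN u)"
      using NM_inner PN by (simp add: inner_diff_left)
    finally show "inner (Tf x) (Bm u + v) = inner x (u - PN u)" .
  qed
  then show "Bm u + v \<in> DA" "TA (Bm u + v) = u - PN u" using adj_char by auto
qed

lemma TA_M: assumes "y \<in> DA" shows "TA y \<in> M"
  unfolding M_def
proof (rule orthI)
  fix n assume "n \<in> N"
  then show "inner n (TA y) = 0" using adj_prop[OF assms] ND by (force simp: N_def)
qed

lemma Rperp_DA: "v \<in> orthogonal_comp R \<Longrightarrow> v \<in> DA \<and> TA v = 0"
  using key_adj[of v 0] B0 PN_id subN subspace_0 by auto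

lemma DA_char: assumes y: "y \<in> DA" shows "y = Bm (TA y) + (y - PR y)"
proof -
  define m where "m = TA y"
  have mM: "m \<in> M" using TA_M y by (simp add: m_def)
  define y' where "y' = Bm m + (y - PR y)"
  have y': "y' \<in> DA" "TA y' = m" using key_adj[OF PR(2), of m] PN_M[OF mM] by (auto simp: y'_def)
  have "y - y' \<in> orthogonal_comp R"
  proof (rule orthI)
    fix s assume "s \<in> R"
    then obtain x where x: "x \<in> D" "s = Tf x" by (auto simp: R_def)
    show "inner s (y - y') = 0"
      using adj_prop[OF y x(1)] adj_prop[OF y'(1) x(1)] y'(2) by (simp add: x inner_diff_right m_def)
  qed
  moreover have "y - y' \<in> R"
  proof -
    have "y - y' = PR y - Bm m" by (simp add: y'_def)
    then show ?thesis using PR B_R subR subspace_diff by metis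
  qed
  ultimately have "y - y' = 0" using R_inter by blast
  then show ?thesis by (simp add: y'_def m_def)
qed

lemma DA_R: "y \<in> DA \<Longrightarrow> y \<in> R \<Longrightarrow> y = Bm (TA y)"
  using DA_char[of y] PR_id[of y] by simp

lemma M_R_of_NR: "N = orthogonal_comp R \<Longrightarrow> M = R"
  unfolding M_def using RR by simp


end


context opT begin

lemma zero_Rperp: "0 \<in> orthogonal_comp R" by (rule subspace_0[OF subspace_orthogonal_comp])
lemma DA0: "0 \<in> DA" "TA 0 = 0" using Rperp_DA[OF zero_Rperp] by auto
lemma B_DA: "Bm u \<in> DA" "TA (Bm u) = u - PN u" using key_adj[OF zero_Rperp, of u] by auto

lemma Rperp_from_adj: assumes "\<And>x. x \<in> D \<Longrightarrow> inner (Tf x) n = 0" shows "n \<in> orthogonal_comp R"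
proof (rule orthI)
  fix s assume "s \<in> R" then obtain x where "x \<in> D" "s = Tf x" by (auto simp: R_def)
  then show "inner s n = 0" using assms by simp
qed

lemma Tf_R: "x \<in> D \<Longrightarrow> Tf x \<in> R" by (simp add: R_def)

lemma normal_NR:
  assumes dom_eq: "{x\<in>DA. TA x \<in> D} = {x\<in>D. Tf x \<in> DA}"
    and val_eq: "\<And>x. x \<in> D \<Longrightarrow> Tf x \<in> DA \<Longrightarrow> Tf (TA x) = TA (Tf x)"
  shows "N = orthogonal_comp R"
proof
  show "N \<subseteq> orthogonal_comp R"
  proof
    fix n assume n: "n \<in> N"
    then have nD: "n \<in> D" and Tn: "Tf n = 0" by (auto simp: N_def)
    then have "n \<in> {x\<in>D. Tf x \<in> DA}" using DA0 by simp
    then have nA: "n \<in> DA" and TAn: "TA n \<in> D" using dom_eq by auto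
    have "Tf (TA n) = 0" using val_eq[OF nD] Tn DA0 by simp
    then have "inner (TA n) (TA n) = 0" using adj_prop[OF nA TAn] by simp
    then have "TA n = 0" by simp
    then show "n \<in> orthogonal_comp R"
      using adj_prop[OF nA] by (intro Rperp_from_adj) simp
  qed
  show "orthogonal_comp R \<subseteq> N"
  proof
    fix v assume v: "v \<in> orthogonal_comp R"
    then have vA: "v \<in> DA" and TAv: "TA v = 0" using Rperp_DA by auto
    then have "v \<in> {x\<in>DA. TA x \<in> D}" using D0 by simp
    then have vD: "v \<in> D" and Tv: "Tf v \<in> DA" using dom_eq by auto
    have "TA (Tf v) = 0" using val_eq[OF vD Tv] TAv T0 by simp
    then have "inner (Tf v) (Tf v) = 0" using adj_prop[OF Tv vD] by simp
    then show "v \<in> N" using vD by (simp add: N_def)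
  qed
qed

context
  assumes NR: "N = orthogonal_comp R"
begin

lemma MR: "M = R" using M_R_of_NR[OF NR] .

lemma PN_PR: "u - PN u = PR u"
proof -
  have "PN u = u - PR u"
    unfolding PN_def
  proof (rule proj_unique[OF subN clN])
    show "u - PR u \<in> N" using NR PR by simp
    show "u - (u - PR u) \<in> orthogonal_comp N" using MR PR by (simp add: M_def[symmetric])
  qed
  then show ?thesis by simp
qed

end

lemma normal_comm:
  assumes dom_eq: "{x\<in>DA. TA x \<in> D} = {x\<in>D. Tf x \<in> DA}"
    and val_eq: "\<And>x. x \<in> D \<Longrightarrow> Tf x \<in> DA \<Longrightarrow> Tf (TA x) = TA (Tf x)"
  shows "Gm (Bm w) = Bm (Gm w)"
proof -
  have NR: "N = orthogonal_comp R" by (rule normal_NR[OF dom_eq val_eq])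
  define x where "x = Gm (Bm w)"
  have xD: "x \<in> D" and xM: "x \<in> M" using G by (auto simp: x_def)
  have Tx: "Tf x = Bm w" using G(3) PR_id[OF B_R] by (simp add: x_def)
  then have "Tf x \<in> DA" using B_DA by simp
  then have "x \<in> {x\<in>D. Tf x \<in> DA}" using xD by simp
  then have xA: "x \<in> DA" and TAx: "TA x \<in> D" using dom_eq by auto
  have "x = Bm (TA x) + (x - PR x)" by (rule DA_char[OF xA])
  moreover have "PR x = x" using xM MR[OF NR] PR_id by simp
  ultimately have x_eq: "x = Bm (TA x)" by simp
  define u where "u = TA x"
  have uM: "u \<in> M" using TA_M[OF xA] by (simp add: u_def)
  have uD: "u \<in> D" using TAx by (simp add: u_def)
  have u_eq: "u = Gm (Tf u)" using G_T[OF uD] PN_M[OF uM] by simp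
  have "Tf u = TA (Tf x)" using val_eq[OF xD \<open>Tf x \<in> DA\<close>] by (simp add: u_def)
  also have "\<dots> = w - PN w" using Tx B_DA by simp
  also have "\<dots> = PR w" by (rule PN_PR[OF NR])
  finally have "u = Gm w" using u_eq G_PR by simp
  then show ?thesis using x_eq by (simp add: x_def u_def)
qed

lemma comm_NR:
  assumes comm: "\<And>w. Gm (Bm w) = Bm (Gm w)"
  shows "N = orthogonal_comp R"
proof
  show "orthogonal_comp R \<subseteq> N"
  proof
    fix x assume x: "x \<in> orthogonal_comp R"
    have "Gm (Bm x) = 0" using comm[of x] G_Rperp[OF x] B0 by simp
    then have "Bm x \<in> orthogonal_comp R" by (rule G_zero)
    then have "Bm x = 0" using B_R R_inter by blast
    then have "x - PN x = 0" using B_DA(2)[of x] DA0 by simp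
    then have "x = PN x" by simp
    then show "x \<in> N" using PN(1)[of x] by simp
  qed
  show "N \<subseteq> orthogonal_comp R"
  proof
    fix x assume x: "x \<in> N"
    have "Bm (Gm x) = 0" using comm[of x] B_N[OF x] G0 by simp
    then have "Gm x - PN (Gm x) = 0" using B_DA(2)[of "Gm x"] DA0 by simp
    then have "Gm x = 0" using PN_M[OF G(2)] by simp
    then show "x \<in> orthogonal_comp R" by (rule G_zero)
  qed
qed

lemma comm_normal1:
  assumes comm: "\<And>w. Gm (Bm w) = Bm (Gm w)"
    and x: "x \<in> D" "Tf x \<in> DA"
  shows "x \<in> DA \<and> TA x \<in> D \<and> Tf (TA x) = TA (Tf x)"
proof -
  have NR: "N = orthogonal_comp R" by (rule comm_NR[OF comm])
  define u where "u = TA (Tf x)"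
  have Tx: "Tf x = Bm u" using DA_R[OF x(2) Tf_R[OF x(1)]] by (simp add: u_def)
  have uM: "u \<in> M" using TA_M[OF x(2)] by (simp add: u_def)
  have "x = Gm (Tf x) + PN x" using G_T[OF x(1)] by simp
  also have "\<dots> = Bm (Gm u) + PN x" using Tx comm by simp
  finally have xe: "x = Bm (Gm u) + PN x" .
  have PNx: "PN x \<in> orthogonal_comp R" using PN(1) NR by simp
  have "x \<in> DA" "TA x = Gm u - PN (Gm u)" using key_adj[OF PNx, of "Gm u"] xe by simp_all
  moreover have "Gm u - PN (Gm u) = Gm u" using PN_M[OF G(2)] by simp
  moreover have "Tf (Gm u) = u" using G(3) PR_id uM MR[OF NR] by simp
  ultimately show ?thesis using G(1) by (simp add: u_def)
qed

lemma comm_normal2: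
  assumes comm: "\<And>w. Gm (Bm w) = Bm (Gm w)"
    and x: "x \<in> DA" "TA x \<in> D"
  shows "x \<in> D \<and> Tf x \<in> DA"
proof -
  have NR: "N = orthogonal_comp R" by (rule comm_NR[OF comm])
  define m where "m = TA x"
  have mM: "m \<in> M" using TA_M[OF x(1)] by (simp add: m_def)
  have mD: "m \<in> D" using x(2) by (simp add: m_def)
  define s where "s = Tf m"
  have m_eq: "m = Gm s" using G_T[OF mD] PN_M[OF mM] by (simp add: s_def)
  have xe: "x = Gm (Bm s) + (x - PR x)" using DA_char[OF x(1)] m_eq comm by (simp add: m_def)
  have r: "x - PR x \<in> N" using PR(2) NR by simp
  then have rD: "x - PR x \<in> D" and Tr: "Tf (x - PR x) = 0" by (auto simp: N_def)
  have xD: "x \<in> D" using Dadd[OF G(1) rD] xe by metis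
  have "Tf x = Tf (Gm (Bm s)) + Tf (x - PR x)" using Tadd[OF G(1) rD] xe by metis
  also have "\<dots> = Bm s" using Tr G(3) PR_id[OF B_R] by simp
  finally have "Tf x = Bm s" .
  then show ?thesis using xD B_DA by simp
qed

lemma adjT: "adj_op (D, Tf) = (DA, TA)"
  by (simp add: adj_op_def dom_op_def app_op_def DA_def TA_def fun_eq_iff)

lemma normal_iff_comm: "normal_op (D, Tf) \<longleftrightarrow> (\<forall>w. Gm (Bm w) = Bm (Gm w))"
proof
  assume nrm: "normal_op (D, Tf)"
  have H: "{x\<in>DA. TA x \<in> D} = {x\<in>D. Tf x \<in> DA} \<and> (\<forall>x. x \<in> DA \<and> TA x \<in> D \<longrightarrow> Tf (TA x) = TA (Tf x))"
    using nrm by (simp add: normal_op_def adjT op_eq_def comp_op_def dom_op_def app_op_def)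
  have dom_eq: "{x\<in>DA. TA x \<in> D} = {x\<in>D. Tf x \<in> DA}"
    and val: "\<forall>x\<in>{x\<in>DA. TA x \<in> D}. Tf (TA x) = TA (Tf x)"
    using H by auto
  have val_eq: "Tf (TA x) = TA (Tf x)" if "x \<in> D" "Tf x \<in> DA" for x
    using val dom_eq that by blast
  show "\<forall>w. Gm (Bm w) = Bm (Gm w)" using normal_comm[OF dom_eq val_eq] by blast
next
  assume comm: "\<forall>w. Gm (Bm w) = Bm (Gm w)"
  have c1: "\<And>w. Gm (Bm w) = Bm (Gm w)" using comm by blast
  have dom_eq: "{x\<in>DA. TA x \<in> D} = {x\<in>D. Tf x \<in> DA}"
    using comm_normal1[OF c1] comm_normal2[OF c1] by blast
  moreover have "\<forall>x\<in>{x\<in>DA. TA x \<in> D}. Tf (TA x) = TA (Tf x)"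
    using comm_normal1[OF c1] dom_eq by blast
  ultimately show "normal_op (D, Tf)"
    by (simp add: normal_op_def adjT op_eq_def comp_op_def dom_op_def app_op_def)
qed

end


context opT begin

definition "Aop = comp_op (DA, TA) (D, Tf)"

lemma Aop: "dom_op Aop = {x\<in>D. Tf x \<in> DA}" "app_op Aop = (\<lambda>x. TA (Tf x))"
  by (simp_all add: Aop_def comp_op_def dom_op_def app_op_def)

lemma range_A: "range_op Aop = M"
proof
  show "range_op Aop \<subseteq> M"
    using TA_M by (auto simp: range_op_def Aop)
  show "M \<subseteq> range_op Aop"
  proof
    fix m assume m: "m \<in> M"
    define x where "x = Gm (Bm m)"
    have Tx: "Tf x = Bm m" using G(3) PR_id[OF B_R] by (simp add: x_def)
    have "x \<in> dom_op Aop" using G(1) Tx B_DA by (simp add: Aop x_def)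
    moreover have "app_op Aop x = m" using Tx B_DA(2) PN_M[OF m] by (simp add: Aop)
    ultimately show "m \<in> range_op Aop" unfolding range_op_def by (metis image_eqI)
  qed
qed

lemma ker_A: "ker_op Aop = N"
proof
  show "ker_op Aop \<subseteq> N"
  proof
    fix x assume "x \<in> ker_op Aop"
    then have x: "x \<in> D" "Tf x \<in> DA" "TA (Tf x) = 0" by (auto simp: ker_op_def Aop)
    then have "inner (Tf x) (Tf x) = 0" using adj_prop[OF x(2) x(1)] by simp
    then show "x \<in> N" using x by (simp add: N_def)
  qed
  show "N \<subseteq> ker_op Aop"
    using DA0 by (auto simp: ker_op_def Aop N_def)
qed

lemma mp_dom: "dom_op (mp_inv Aop) = UNIV"
proof -
  have "y \<in> {u + v | u v. u \<in> M \<and> v \<in> N}" for y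
  proof -
    have "y = (y - PN y) + PN y" by simp
    then show ?thesis using PN by blast
  qed
  then show ?thesis
    by (auto simp: mp_inv_def dom_op_def range_A MN)
qed

lemma mp_app: "app_op (mp_inv Aop) y = Gm (Bm y)"
proof -
  have "app_op (mp_inv Aop) y = (THE x. x \<in> coker_dom Aop \<and>
                   (\<exists>u v. y = u + v \<and> u \<in> M \<and> v \<in> N \<and> app_op Aop x = u))"
    by (simp add: mp_inv_def app_op_def range_A MN)
  also have "\<dots> = Gm (Bm y)"
  proof (rule the_equality)
    define x where "x = Gm (Bm y)"
    have Tx: "Tf x = Bm y" using G(3) PR_id[OF B_R] by (simp add: x_def)
    have "x \<in> coker_dom Aop"
      using G Tx B_DA by (simp add: coker_dom_def Aop ker_A M_def[symmetric] x_def)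
    moreover have "y = (y - PN y) + PN y \<and> y - PN y \<in> M \<and> PN y \<in> N \<and> app_op Aop x = y - PN y"
      using PN Tx B_DA by (simp add: Aop)
    ultimately show "x \<in> coker_dom Aop \<and> (\<exists>u v. y = u + v \<and> u \<in> M \<and> v \<in> N \<and> app_op Aop x = u)"
      unfolding x_def by blast
  next
    fix x assume "x \<in> coker_dom Aop \<and> (\<exists>u v. y = u + v \<and> u \<in> M \<and> v \<in> N \<and> app_op Aop x = u)"
    then obtain u v where x: "x \<in> D" "Tf x \<in> DA" "x \<in> M" and uv: "y = u + v" "u \<in> M" "v \<in> N"
      and Au: "TA (Tf x) = u"
      by (auto simp: coker_dom_def Aop ker_A M_def[symmetric])
    have "x = Gm (Tf x)" using G_T[OF x(1)] PN_M[OF x(3)] by simp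
    also have "Tf x = Bm u" using DA_R[OF x(2) Tf_R[OF x(1)]] Au by simp
    also have "Bm u = Bm y" using uv B_N[OF uv(3)] B_add by simp
    finally show "x = Gm (Bm y)" .
  qed
  finally show ?thesis .
qed

lemma cd_eq: "cauchy_dual (D, Tf) = (UNIV, Bm)"
proof -
  have "cauchy_dual (D, Tf) = comp_op (D, Tf) (mp_inv Aop)"
    by (simp add: cauchy_dual_def Aop_def adjT)
  also have "\<dots> = (UNIV, Bm)"
  proof -
    have "Tf (Gm (Bm y)) = Bm y" for y using G(3) PR_id[OF B_R] by simp
    then show ?thesis
      using G(1) by (simp add: comp_op_def mp_dom mp_app fun_eq_iff) (simp add: dom_op_def app_op_def)
  qed
  finally show ?thesis .
qed

lemma adjB: "adj_op (UNIV, Bm) = (UNIV, Gm)"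
proof -
  have e: "inner (Bm x) y = inner x (Gm y)" for x y
    using B_adj[of y x] by (simp add: inner_commute)
  have "(THE z. \<forall>x. inner (Bm x) y = inner x z) = Gm y" for y
    by (rule the_equality) (auto simp: e intro: rep_unique)
  then show ?thesis
    by (auto simp: adj_op_def dom_op_def app_op_def e fun_eq_iff)
qed

lemma normal_cd_iff: "normal_op (cauchy_dual (D, Tf)) \<longleftrightarrow> (\<forall>w. Gm (Bm w) = Bm (Gm w))"
  by (auto simp: cd_eq adjB normal_op_def op_eq_def comp_op_def dom_op_def app_op_def)

end

theorem theorem2p4:
  fixes J :: "'a::{real_inner, complete_space} \<Rightarrow> 'a"
    and T :: "'a op"
  assumes "complex_structure J"
    and "clinear_op J T"
    and "densely_defined T"
    and "closed_op T"
    and "closed (range_op T)"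
  shows "normal_op T \<longleftrightarrow> normal_op (cauchy_dual T)"
proof -
  interpret opT "dom_op T" "app_op T"
  proof
    show "subspace (dom_op T)" using assms(2) by (simp add: clinear_op_def)
    show "\<And>x y. x \<in> dom_op T \<Longrightarrow> y \<in> dom_op T \<Longrightarrow> app_op T (x + y) = app_op T x + app_op T y"
      using assms(2) by (simp add: clinear_op_def)
    show "\<And>c x. x \<in> dom_op T \<Longrightarrow> app_op T (c *\<^sub>R x) = c *\<^sub>R app_op T x"
      using assms(2) by (simp add: clinear_op_def)
    show "closure (dom_op T) = UNIV" using assms(3) by (simp add: densely_defined_def)
    show "closed {(x, app_op T x) | x. x \<in> dom_op T}" using assms(4) by (simp add: closed_op_def graph_op_def)
    show "closed (app_op T ` dom_op T)" using assms(5) by (simp add: range_op_def)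
  qed
  have T: "T = (dom_op T, app_op T)" by (simp add: dom_op_def app_op_def)
  show ?thesis
    using normal_iff_comm normal_cd_iff T by metis
qed


end
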